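(* Let $n$ be even and let $v_0,\dots,v_{n+1}\in\mathbb{R}^n$ be hereditarily spanning. Then $dS(v_0,\dots,v_{n+1})=0$.
   Context: $\mathrm{Or}(v_1,\dots,v_n)=\operatorname{sign}\det(v_1,\dots,v_n)$ (zero if not a basis). Define $S:(\mathbb{R}^n)^{n+1}\to\{-1,0,1\}$ by $S(v_0,\dots,v_n)=0$ if $0$ is not in the interior of the convex hull of $v_0,\dots,v_n$, and otherwise $S(v_0,\dots,v_n)=(-1)^i\mathrm{Or}(v_0,\dots,\widehat{v_i},\dots,v_n)$ for any $i\in\{0,\dots,n\}$ (this is independent of $i$). A $k$-tuple ($k\ge n$) in $\mathbb{R}^n$ is hereditarily spanning if every $n$ of its elements span $\mathbb{R}^n$. $dS(v_0,\dots,v_{n+1})=\sum_{i=0}^{n+1}(-1)^iS(v_0,\dots,\widehat{v_i},\dots,v_{n+1})$. *)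

theory Defs
  imports "HOL-Analysis.Analysis" "HOL-Library.Numeral_Type"
begin

text \<open>Vectors in R^n are elements of real^'n; the coordinate/column order of
  'n is the one given by its enum class (for numeral types: 0,1,...,n-1).\<close>

definition enum_pos :: "'n::enum \<Rightarrow> nat" where
  "enum_pos j = (THE k. k < length (Enum.enum :: 'n list) \<and> Enum.enum ! k = j)"

definition Or :: "(real^'n::enum) list \<Rightarrow> real" where
  "Or ws = (if length ws = CARD('n)
            then sgn (det (\<chi> i j. (ws ! enum_pos j) $ i))
            else 0)"

definition del_nth :: "nat \<Rightarrow> 'a list \<Rightarrow> 'a list" where
  "del_nth i xs = take i xs @ drop (Suc i) xs"

text \<open>S(v_0,...,v_n); value 0 if 0 not in the interior of the convex hull,
  otherwise (-1)^i Or(v_0,..,hat v_i,..,v_n), here with i = 0.\<close>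
definition S :: "(real^'n::enum) list \<Rightarrow> real" where
  "S vs = (if 0 \<in> interior (convex hull (set vs)) then Or (del_nth 0 vs) else 0)"

definition dS :: "(real^'n::enum) list \<Rightarrow> real" where
  "dS vs = (\<Sum>i<length vs. (-1) ^ i * S (del_nth i vs))"

definition hereditarily_spanning :: "(real^'n::enum) list \<Rightarrow> bool" where
  "hereditarily_spanning vs \<longleftrightarrow> CARD('n) \<le> length vs \<and>
     (\<forall>I \<subseteq> {..<length vs}. card I = CARD('n) \<longrightarrow> span ((!) vs ` I) = UNIV)"

end

theory Submission
  imports Defs
begin

lemma enum_pos_nth:
  assumes "p < CARD('n)"
  shows "enum_pos ((Enum.enum::'n::enum list) ! p) = p"
proof -
  have L: "length (Enum.enum::'n list) = CARD('n)" by (simp add: card_UNIV_length_enum)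
  show ?thesis unfolding enum_pos_def
    apply (rule the_equality)
    using assms L apply simp
    using assms L by (auto simp: nth_eq_iff_index_eq enum_distinct)
qed

lemma enum_pos_props:
  "enum_pos (j::'n::enum) < CARD('n) \<and> (Enum.enum::'n list) ! enum_pos j = j"
proof -
  have L: "length (Enum.enum::'n list) = CARD('n)" by (simp add: card_UNIV_length_enum)
  have "j \<in> set (Enum.enum::'n list)" using UNIV_enum by auto
  then obtain k where k: "k < length (Enum.enum::'n list)" "Enum.enum ! k = j"
    by (auto simp: in_set_conv_nth)
  then have "enum_pos j = k" using enum_pos_nth[of k] L by auto
  then show ?thesis using k L by auto
qed

lemma enum_pos_eq_iff:
  assumes "p < CARD('n)"
  shows "enum_pos (j::'n::enum) = p \<longleftrightarrow> j = Enum.enum ! p"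
  using enum_pos_nth[OF assms] enum_pos_props[of j] by metis

definition Fc :: "(nat \<Rightarrow> real^'n::enum) \<Rightarrow> real" where
  "Fc f = det (\<chi> i j. f (enum_pos j) $ i)"

lemma Fc_rows: fixes f :: "nat \<Rightarrow> real^'n::enum" shows "Fc f = det ((\<chi> j. f (enum_pos j)))"
proof -
  have "(\<chi> i j. f (enum_pos j) $ i) = transpose ((\<chi> j. f (enum_pos j)))"
    by (simp add: transpose_def vec_eq_iff)
  then show ?thesis unfolding Fc_def by (metis det_transpose)
qed

lemma Fc_cong:
  assumes "\<And>p. p < CARD('n) \<Longrightarrow> f p = g p"
  shows "Fc (f :: nat \<Rightarrow> real^'n::enum) = Fc g"
  unfolding Fc_def by (rule arg_cong[where f=det]) (simp add: vec_eq_iff assms enum_pos_props)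

lemma Fc_lin:
  assumes "p < CARD('n)" "finite A"
  shows "Fc ((f :: nat \<Rightarrow> real^'n::enum)(p := (\<Sum>l\<in>A. c l *\<^sub>R g l))) = (\<Sum>l\<in>A. c l * Fc (f(p := g l)))"
proof -
  let ?k = "(Enum.enum::'n list) ! p"
  have e: "\<And>j. enum_pos j = p \<longleftrightarrow> j = ?k" using enum_pos_eq_iff[OF assms(1)] by blast
  have "Fc (f(p := (\<Sum>l\<in>A. c l *\<^sub>R g l))) =
     det ((\<chi> j. if j = ?k then (\<Sum>l\<in>A. c l *s g l) else f (enum_pos j)))"
    unfolding Fc_rows by (rule arg_cong[where f=det]) (auto simp: vec_eq_iff e scalar_mult_eq_scaleR)
  also have "\<dots> = (\<Sum>l\<in>A. det ((\<chi> j. if j = ?k then c l *s g l else f (enum_pos j))))"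
    by (rule det_linear_row_sum[OF assms(2)])
  also have "\<dots> = (\<Sum>l\<in>A. c l * det ((\<chi> j. if j = ?k then g l else f (enum_pos j))))"
    by (simp add: det_row_mul)
  also have "\<dots> = (\<Sum>l\<in>A. c l * Fc (f(p := g l)))"
    unfolding Fc_rows by (intro sum.cong refl arg_cong2[where f="(*)"] arg_cong[where f=det]) (auto simp: vec_eq_iff e)
  finally show ?thesis .
qed

lemma Fc_eq0:
  assumes "p < CARD('n)" "q < CARD('n)" "p \<noteq> q" "f p = f q"
  shows "Fc (f :: nat \<Rightarrow> real^'n::enum) = 0"
proof -
  let ?A = "(\<chi> j. f (enum_pos (j::'n)))"
  have "row ((Enum.enum::'n list) ! p) ?A = row (Enum.enum ! q) ?A"
  proof -
    have "enum_pos ((Enum.enum::'n list) ! p) = p" "enum_pos ((Enum.enum::'n list) ! q) = q"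
      using enum_pos_nth assms(1,2) by blast+
    then show ?thesis using assms(4) by (simp add: row_def)
  qed
  moreover have "(Enum.enum::'n list) ! p \<noteq> Enum.enum ! q"
    using enum_pos_nth[OF assms(1)] enum_pos_nth[OF assms(2)] assms(3) by metis
  ultimately show ?thesis unfolding Fc_rows using det_identical_rows by blast
qed


locale HS =
  fixes vs :: "(real^'n::enum) list"
  assumes len: "length vs = CARD('n) + 2"
    and hs: "hereditarily_spanning vs"
    and n2: "CARD('n) \<ge> 2"
begin

lemma spanI: "I \<subseteq> {..<length vs} \<Longrightarrow> card I = CARD('n) \<Longrightarrow> span ((!) vs ` I) = UNIV"
  using hs unfolding hereditarily_spanning_def by blast

lemma DIMn: "DIM((real, 'n) vec) = CARD('n)" by simp

lemma dist: "distinct vs"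
proof (rule ccontr)
  assume "\<not> distinct vs"
  then obtain i j where ij: "i < length vs" "j < length vs" "i \<noteq> j" "vs ! i = vs ! j"
    by (auto simp: distinct_conv_nth)
  have c: "card ({..<length vs} - {i,j}) = CARD('n)" using ij len by (simp add: card_Diff_subset)
  obtain J where J: "J \<subseteq> {..<length vs} - {i,j}" "card J = CARD('n) - 2"
    using obtain_subset_with_card_n[of "CARD('n) - 2" "{..<length vs} - {i,j}"] c by auto
  have fJ: "finite J" using J(1) finite_subset by blast
  let ?I = "insert i (insert j J)"
  have cI: "card ?I = CARD('n)" using J fJ ij n2 by (auto simp: card_insert_if)
  have sI: "?I \<subseteq> {..<length vs}" using J ij by auto
  have "(!) vs ` ?I = (!) vs ` (insert i J)" using ij by auto
  moreover have "card ((!) vs ` (insert i J)) \<le> CARD('n) - 1"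
  proof -
    have "card ((!) vs ` insert i J) \<le> card (insert i J)" by (rule card_image_le) (simp add: fJ)
    moreover have "card (insert i J) \<le> Suc (card J)" by (simp add: card_insert_if fJ)
    ultimately show ?thesis using J(2) n2 by linarith
  qed
  ultimately have "card ((!) vs ` ?I) < CARD('n)" using n2 by simp
  moreover have "dim ((!) vs ` ?I) \<le> card ((!) vs ` ?I)" by (rule dim_le_card') (simp add: fJ)
  moreover have "dim ((!) vs ` ?I) = CARD('n)" using spanI[OF sI cI] dim_eq_full by (metis DIMn)
  ultimately show False by simp
qed

lemma indep:
  assumes I: "I \<subseteq> {..<length vs}" "card I = CARD('n)"
    and s: "(\<Sum>k\<in>I. c k *\<^sub>R vs ! k) = 0" and k: "k \<in> I"
  shows "c k = 0"
proof -
  have fI: "finite I" using I finite_subset by blast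
  have inj: "inj_on ((!) vs) I" using dist I(1) unfolding inj_on_def by (metis lessThan_iff nth_eq_iff_index_eq subsetD)
  let ?B = "(!) vs ` I"
  have cB: "card ?B = CARD('n)" using inj I card_image by metis
  have "independent ?B"
    by (rule card_le_dim_spanning[where V=UNIV]) (use spanI[OF I] fI cB in auto)
  then have "\<forall>u. (\<Sum>v\<in>?B. u v *\<^sub>R v) = 0 \<longrightarrow> (\<forall>v\<in>?B. u v = 0)"
    using dependent_finite[of ?B] fI by auto
  moreover have "(\<Sum>v\<in>?B. (c \<circ> the_inv_into I ((!) vs)) v *\<^sub>R v) = (\<Sum>k\<in>I. c k *\<^sub>R vs ! k)"
    by (subst sum.reindex[OF inj]) (simp add: the_inv_into_f_f[OF inj])
  ultimately have "\<forall>v\<in>?B. (c \<circ> the_inv_into I ((!) vs)) v = 0" using s by auto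
  then show ?thesis using k by (simp add: the_inv_into_f_f[OF inj])
qed

definition dep :: "(nat \<Rightarrow> real) \<Rightarrow> bool" where
  "dep a \<longleftrightarrow> (\<Sum>k<length vs. a k *\<^sub>R vs ! k) = 0"

lemma two_zeros:
  assumes "dep a" "i < length vs" "j < length vs" "i \<noteq> j" "a i = 0" "a j = 0" "k < length vs"
  shows "a k = 0"
proof (cases "k \<in> {i,j}")
  case True then show ?thesis using assms by auto
next
  case False
  let ?I = "{..<length vs} - {i,j}"
  have c: "card ?I = CARD('n)" using assms len by (simp add: card_Diff_subset)
  have "(\<Sum>k<length vs. a k *\<^sub>R vs ! k) = (\<Sum>k\<in>?I. a k *\<^sub>R vs ! k)"
    by (rule sum.mono_neutral_right) (use assms in auto)
  then have "(\<Sum>k\<in>?I. a k *\<^sub>R vs ! k) = 0" using assms(1) by (simp add: dep_def)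
  then show ?thesis using indep[of ?I a k] c False assms by auto
qed

lemma exists_dep:
  assumes "i < length vs"
  shows "\<exists>b. dep b \<and> b i = 1"
proof -
  obtain I where I: "I \<subseteq> {..<length vs} - {i}" "card I = CARD('n)"
    using obtain_subset_with_card_n[of "CARD('n)" "{..<length vs} - {i}"] assms len
    by (auto simp: card_Diff_subset)
  have fI: "finite I" using I finite_subset by blast
  have I': "I \<subseteq> {..<length vs}" using I by auto
  have inj: "inj_on ((!) vs) I" using dist I' unfolding inj_on_def by (metis lessThan_iff nth_eq_iff_index_eq subsetD)
  have "vs ! i \<in> span ((!) vs ` I)" using spanI[OF I' I(2)] by simp
  then obtain u where u: "vs ! i = (\<Sum>v\<in>(!) vs ` I. u v *\<^sub>R v)"
    using span_finite[of "(!) vs ` I"] fI by auto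
  also have "\<dots> = (\<Sum>k\<in>I. u (vs ! k) *\<^sub>R vs ! k)"
    by (subst sum.reindex[OF inj]) simp
  finally have e: "vs ! i = (\<Sum>k\<in>I. u (vs ! k) *\<^sub>R vs ! k)" .
  define b where "b k = (if k = i then 1 else if k \<in> I then - u (vs ! k) else 0)" for k
  have "(\<Sum>k<length vs. b k *\<^sub>R vs ! k) = (\<Sum>k\<in>insert i I. b k *\<^sub>R vs ! k)"
    by (rule sum.mono_neutral_right) (use assms I in \<open>auto simp: b_def\<close>)
  also have "\<dots> = vs ! i + (\<Sum>k\<in>I. b k *\<^sub>R vs ! k)"
    using I fI by (subst sum.insert) (auto simp: b_def)
  also have "(\<Sum>k\<in>I. b k *\<^sub>R vs ! k) = - (\<Sum>k\<in>I. u (vs ! k) *\<^sub>R vs ! k)"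
  proof -
    have "(\<Sum>k\<in>I. b k *\<^sub>R vs ! k) = (\<Sum>k\<in>I. - (u (vs ! k) *\<^sub>R vs ! k))"
      by (rule sum.cong) (use I in \<open>auto simp: b_def\<close>)
    then show ?thesis by (simp add: sum_negf)
  qed
  finally have "dep b" using e by (simp add: dep_def)
  then show ?thesis by (auto simp: b_def)
qed

end

context HS begin

lemma dep_lin:
  assumes "dep a" "dep b"
  shows "dep (\<lambda>k. x * a k + y * b k)"
proof -
  have "(\<Sum>k<length vs. (x * a k + y * b k) *\<^sub>R vs ! k)
      = x *\<^sub>R (\<Sum>k<length vs. a k *\<^sub>R vs ! k) + y *\<^sub>R (\<Sum>k<length vs. b k *\<^sub>R vs ! k)"
    by (simp add: scaleR_add_left sum.distrib scaleR_sum_right)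
  then show ?thesis using assms by (simp add: dep_def)
qed

definition Npos :: "nat \<Rightarrow> bool" where
  "Npos i \<longleftrightarrow> (\<exists>a. dep a \<and> a i = 0 \<and> (\<forall>j<length vs. j \<noteq> i \<longrightarrow> a j > 0))"

lemma no_three:
  assumes "i < length vs" "j < length vs" "l < length vs" "i \<noteq> j" "i \<noteq> l" "j \<noteq> l"
    and "Npos i" "Npos j" "Npos l"
  shows False
proof -
  obtain ai where hi: "dep ai" "ai i = 0" "\<forall>k<length vs. k \<noteq> i \<longrightarrow> ai k > 0" using assms Npos_def by blast
  obtain aj where hj: "dep aj" "aj j = 0" "\<forall>k<length vs. k \<noteq> j \<longrightarrow> aj k > 0" using assms Npos_def by blast
  obtain al where hl: "dep al" "al l = 0" "\<forall>k<length vs. k \<noteq> l \<longrightarrow> al k > 0" using assms Npos_def by blast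
  define x where "x = al j / ai j"
  define y where "y = al i / aj i"
  have pos: "ai j > 0" "al j > 0" "aj i > 0" "al i > 0" using hi hj hl assms by auto
  then have x: "x > 0" and y: "y > 0" by (simp_all add: x_def y_def)
  define c where "c k = 1 * al k + (- x) * ai k + (- y) * aj k" for k
  have "dep (\<lambda>k. 1 * (1 * al k + (- x) * ai k) + (- y) * aj k)"
    by (intro dep_lin hi(1) hj(1) hl(1))
  then have dc: "dep c" unfolding c_def by simp
  have "c i = 0" using hi(2) pos(3) by (simp add: c_def y_def)
  moreover have "c j = 0" using hj(2) pos(1) by (simp add: c_def x_def)
  ultimately have "c l = 0" using two_zeros[OF dc] assms by blast
  moreover have "c l < 0"
  proof -
    have "x * ai l > 0" "y * aj l > 0" using x y hi hj assms by auto
    then show ?thesis using hl by (simp add: c_def)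
  qed
  ultimately show False by simp
qed

lemma second:
  assumes i: "i < length vs" and N: "Npos i"
  shows "\<exists>j<length vs. j \<noteq> i \<and> Npos j"
proof -
  obtain a where a: "dep a" "a i = 0" "\<forall>k<length vs. k \<noteq> i \<longrightarrow> a k > 0" using N Npos_def by blast
  obtain b where b: "dep b" "b i = 1" using exists_dep[OF i] by blast
  let ?R = "{..<length vs} - {i}"
  have Rne: "?R \<noteq> {}" using len i by (cases "i = 0") auto
  define s where "s = Min ((\<lambda>k. b k / a k) ` ?R)"
  have "s \<in> (\<lambda>k. b k / a k) ` ?R" unfolding s_def by (rule Min_in) (use Rne in auto)
  then obtain j where j: "j \<in> ?R" "b j / a j = s" by auto
  have sle: "s \<le> b k / a k" if "k \<in> ?R" for k unfolding s_def using that by auto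
  define z where "z k = 1 * b k + (- s) * a k" for k
  have dz: "dep z" unfolding z_def by (intro dep_lin a b)
  have zi: "z i = 1" using a b by (simp add: z_def)
  have zj: "z j = 0" using j a by (auto simp: z_def field_simps)
  have zge: "z k \<ge> 0" if "k \<in> ?R" for k
  proof -
    have "a k > 0" using that a by auto
    then have "s * a k \<le> b k" using sle[OF that] by (simp add: pos_le_divide_eq)
    then show ?thesis by (simp add: z_def)
  qed
  have "\<forall>k<length vs. k \<noteq> j \<longrightarrow> z k > 0"
  proof (intro allI impI)
    fix k assume k: "k < length vs" "k \<noteq> j"
    show "z k > 0"
    proof (cases "k = i")
      case True then show ?thesis using zi by simp
    next
      case False
      then have "z k \<ge> 0" using zge k by auto
      moreover have "z k \<noteq> 0"
      proof
        assume "z k = 0"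
        then have "z i = 0" using two_zeros[OF dz, of j k i] j k i zj by auto
        then show False using zi by simp
      qed
      ultimately show ?thesis by simp
    qed
  qed
  then have "Npos j" using dz zj Npos_def by blast
  then show ?thesis using j by auto
qed

end

definition sk :: "nat \<Rightarrow> nat \<Rightarrow> nat" where "sk i p = (if p < i then p else Suc p)"

lemma sgn_opp:
  fixes X Y a b :: real
  assumes "a > 0" "b > 0" "a * X + b * Y = 0"
  shows "sgn X = - sgn Y"
proof -
  have e: "a * X = - (b * Y)" using assms(3) by linarith
  consider "Y > 0" | "Y = 0" | "Y < 0" by linarith
  then show ?thesis
  proof cases
    case 1 then have "b * Y > 0" using assms by simp
    then have "a * X < 0" using e by linarith
    then have "X < 0" using assms(1) by (simp add: mult_less_0_iff)
    then show ?thesis using 1 by simp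
  next
    case 2 then have "a * X = 0" using e by simp
    then show ?thesis using 2 assms(1) by simp
  next
    case 3 then have "b * Y < 0" using assms by (simp add: mult_pos_neg)
    then have "a * X > 0" using e by linarith
    then have "X > 0" using assms(1) by (simp add: zero_less_mult_iff)
    then show ?thesis using 3 by simp
  qed
qed

lemma Fc_step:
  fixes f :: "nat \<Rightarrow> real^'n::enum"
  assumes k: "k < CARD('n)" and s: "(\<Sum>p\<in>{..CARD('n)}. a p *\<^sub>R f p) = 0"
  shows "a k * Fc (\<lambda>p. f (sk (Suc k) p)) + a (Suc k) * Fc (\<lambda>p. f (sk k p)) = 0"
proof -
  define g where "g = (\<lambda>p. f (sk (Suc k) p))"
  have gk: "g k = f k" by (simp add: g_def sk_def)
  have e1: "Fc (\<lambda>p. f (sk k p)) = Fc (g(k := f (Suc k)))"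
    by (rule Fc_cong) (auto simp: g_def sk_def)
  have e2: "Fc g = Fc (g(k := f k))" using gk by (simp add: fun_upd_idem)
  let ?B = "{..CARD('n)} - {k, Suc k}"
  have split: "(\<Sum>p\<in>{..CARD('n)}. a p *\<^sub>R f p) = (\<Sum>l\<in>{k, Suc k}. a l *\<^sub>R f l) + (\<Sum>l\<in>?B. a l *\<^sub>R f l)"
    using k by (subst sum.subset_diff[of "{k, Suc k}"]) auto
  have eq: "(\<Sum>l\<in>{k, Suc k}. a l *\<^sub>R f l) = (\<Sum>l\<in>?B. (- a l) *\<^sub>R f l)"
    using s split by (simp add: sum_negf eq_neg_iff_add_eq_0)
  have "Fc (g(k := (\<Sum>l\<in>{k, Suc k}. a l *\<^sub>R f l))) = (\<Sum>l\<in>{k, Suc k}. a l * Fc (g(k := f l)))"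
    by (rule Fc_lin) (use k in auto)
  also have "\<dots> = a k * Fc g + a (Suc k) * Fc (\<lambda>p. f (sk k p))"
    using e1 e2 by simp
  finally have A: "Fc (g(k := (\<Sum>l\<in>{k, Suc k}. a l *\<^sub>R f l))) = a k * Fc g + a (Suc k) * Fc (\<lambda>p. f (sk k p))" .
  have "Fc (g(k := (\<Sum>l\<in>?B. (- a l) *\<^sub>R f l))) = (\<Sum>l\<in>?B. (- a l) * Fc (g(k := f l)))"
    by (rule Fc_lin) (use k in auto)
  also have "\<dots> = 0"
  proof (rule sum.neutral, rule ballI)
    fix l assume l: "l \<in> ?B"
    define q where "q = (if l < k then l else l - 1)"
    have q: "q < CARD('n)" "q \<noteq> k" using l k by (auto simp: q_def)
    have "(g(k := f l)) k = (g(k := f l)) q" using l q by (auto simp: q_def g_def sk_def)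
    then have "Fc (g(k := f l)) = 0" using Fc_eq0[OF k q(1) q(2)[symmetric]] by blast
    then show "(- a l) * Fc (g(k := f l)) = 0" by simp
  qed
  finally show ?thesis using A eq g_def by simp
qed

lemma Fc_sign:
  fixes f :: "nat \<Rightarrow> real^'n::enum"
  assumes s: "(\<Sum>p\<in>{..CARD('n)}. a p *\<^sub>R f p) = 0" and pos: "\<And>p. p \<le> CARD('n) \<Longrightarrow> a p > 0"
  shows "k \<le> CARD('n) \<Longrightarrow> sgn (Fc (\<lambda>p. f (sk k p))) = (-1)^k * sgn (Fc (\<lambda>p. f (sk 0 p)))"
proof (induction k)
  case 0 then show ?case by simp
next
  case (Suc k)
  then have k: "k < CARD('n)" by simp
  have "sgn (Fc (\<lambda>p. f (sk (Suc k) p))) = - sgn (Fc (\<lambda>p. f (sk k p)))"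
    by (rule sgn_opp[OF pos pos Fc_step[OF k s]]) (use k in auto)
  then show ?case using Suc k by simp
qed


lemma len_del: "i < length xs \<Longrightarrow> length (del_nth i xs) = length xs - 1"
  by (simp add: del_nth_def)

lemma nth_del: "i < length xs \<Longrightarrow> p < length xs - 1 \<Longrightarrow> del_nth i xs ! p = xs ! sk i p"
  by (auto simp: del_nth_def sk_def nth_append min_def)

lemma sk_inj: "inj_on (sk i) A"
  by (auto simp: inj_on_def sk_def split: if_splits)

lemma sk_img: "i < m \<Longrightarrow> sk i ` {..<m - 1} = {..<m} - {i}"
proof -
  assume i: "i < m"
  have "k \<in> sk i ` {..<m - 1}" if "k < m" "k \<noteq> i" for k
  proof (cases "k < i")
    case True then show ?thesis using i by (auto simp: sk_def image_iff intro!: bexI[of _ k])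
  next
    case False then show ?thesis using that by (auto simp: sk_def image_iff intro!: bexI[of _ "k - 1"])
  qed
  then show ?thesis using i by (auto simp: sk_def)
qed

lemma set_del: "i < length xs \<Longrightarrow> set (del_nth i xs) = (!) xs ` ({..<length xs} - {i})"
proof -
  assume i: "i < length xs"
  have "set (del_nth i xs) = (\<lambda>p. del_nth i xs ! p) ` {..<length xs - 1}"
    using i by (auto simp: set_conv_nth len_del image_iff)
  also have "\<dots> = (\<lambda>p. xs ! sk i p) ` {..<length xs - 1}"
    using i by (intro image_cong refl) (simp add: nth_del)
  also have "\<dots> = (!) xs ` (sk i ` {..<length xs - 1})" by (simp add: image_image)
  finally show ?thesis using sk_img[OF i] by simp
qed

lemma sum_sk: "i < m \<Longrightarrow> (\<Sum>p<m - 1. g (sk i p)) = (\<Sum>k\<in>{..<m} - {i}. g k)"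
  using sum.reindex[OF sk_inj[of i "{..<m - 1}"], of g] sk_img[of i m] by simp

context HS begin

lemma sumT:
  assumes "R \<subseteq> {..<length vs}"
  shows "(\<Sum>x\<in>(!) vs ` R. h x) = (\<Sum>k\<in>R. h (vs ! k))"
proof -
  have inj: "inj_on ((!) vs) R" using dist assms unfolding inj_on_def by (metis lessThan_iff nth_eq_iff_index_eq subsetD)
  show ?thesis by (simp add: sum.reindex[OF inj])
qed

lemma C_iff:
  assumes i: "i < length vs"
  shows "0 \<in> interior (convex hull set (del_nth i vs)) \<longleftrightarrow> Npos i"
proof -
  let ?R = "{..<length vs} - {i}"
  let ?T = "(!) vs ` ?R"
  have T: "set (del_nth i vs) = ?T" by (rule set_del[OF i])
  have inj: "inj_on ((!) vs) ?R" using dist unfolding inj_on_def by (metis Diff_iff lessThan_iff nth_eq_iff_index_eq)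
  have cR: "card ?R = Suc CARD('n)" using i len by (simp add: card_Diff_subset)
  have cT: "card ?T = Suc DIM((real, 'n) vec)" using card_image[OF inj] cR by simp
  have fT: "finite ?T" by simp
  have Rsub: "?R \<subseteq> {..<length vs}" by auto
  have dep_from: "(\<Sum>k<length vs. c k *\<^sub>R vs ! k) = (\<Sum>k\<in>?R. c k *\<^sub>R vs ! k)" if "c i = 0" for c
    by (rule sum.mono_neutral_right) (use that i in auto)
  show ?thesis
  proof
    assume h: "0 \<in> interior (convex hull set (del_nth i vs))"
    then have "interior (convex hull ?T) \<noteq> {}" using T by auto
    then have na: "\<not> affine_dependent ?T" using interior_convex_hull_eq_empty[OF cT] by blast
    have "0 \<in> interior (convex hull ?T)" using h T by simp
    then obtain u where u: "\<forall>x\<in>?T. 0 < u x" "(\<Sum>x\<in>?T. u x *\<^sub>R x) = 0"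
      using interior_convex_hull_explicit_minimal[OF na] cT by (auto split: if_splits)
    define a where "a k = (if k = i then 0 else u (vs ! k))" for k
    have "(\<Sum>k<length vs. a k *\<^sub>R vs ! k) = (\<Sum>k\<in>?R. a k *\<^sub>R vs ! k)"
      by (rule dep_from) (simp add: a_def)
    also have "\<dots> = (\<Sum>k\<in>?R. u (vs ! k) *\<^sub>R vs ! k)" by (rule sum.cong) (auto simp: a_def)
    also have "\<dots> = 0" using u(2) sumT[OF Rsub, of "\<lambda>x. u x *\<^sub>R x"] by simp
    finally have "dep a" by (simp add: dep_def)
    moreover have "\<forall>j<length vs. j \<noteq> i \<longrightarrow> a j > 0" using u(1) by (auto simp: a_def)
    ultimately show "Npos i" unfolding Npos_def by (auto simp: a_def)
  next
    assume "Npos i"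
    then obtain a where a: "dep a" "a i = 0" "\<forall>j<length vs. j \<noteq> i \<longrightarrow> a j > 0" using Npos_def by blast
    define j1 :: nat where "j1 = (if i = 0 then 1 else 0)"
    have j1: "j1 \<in> ?R" using i len by (auto simp: j1_def)
    have fR: "finite ?R" by simp
    have Spos: "(\<Sum>k\<in>?R. a k) > 0" using a j1 by (intro sum_pos fR) auto
    have na: "\<not> affine_dependent ?T"
    proof
      assume "affine_dependent ?T"
      then obtain U where U: "sum U ?T = 0" "\<exists>v\<in>?T. U v \<noteq> 0" "(\<Sum>v\<in>?T. U v *\<^sub>R v) = 0"
        using affine_dependent_explicit_finite[OF fT] by blast
      define c where "c k = (if k = i then 0 else U (vs ! k))" for k
      have "(\<Sum>k<length vs. c k *\<^sub>R vs ! k) = (\<Sum>k\<in>?R. c k *\<^sub>R vs ! k)"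
        by (rule dep_from) (simp add: c_def)
      also have "\<dots> = (\<Sum>k\<in>?R. U (vs ! k) *\<^sub>R vs ! k)" by (rule sum.cong) (auto simp: c_def)
      also have "\<dots> = 0" using U(3) sumT[OF Rsub, of "\<lambda>x. U x *\<^sub>R x"] by simp
      finally have dc: "dep c" by (simp add: dep_def)
      define lam where "lam = c j1 / a j1"
      define d where "d k = 1 * c k + (- lam) * a k" for k
      have dd: "dep d" unfolding d_def by (intro dep_lin dc a(1))
      have aj1: "a j1 > 0" using a j1 by auto
      have "d i = 0" using a by (simp add: d_def c_def)
      moreover have "d j1 = 0" using aj1 by (simp add: d_def lam_def)
      ultimately have d0: "d k = 0" if "k < length vs" for k
        using two_zeros[OF dd i, of j1 k] j1 that by auto
      have ck: "c k = lam * a k" if "k \<in> ?R" for k using d0[of k] that by (simp add: d_def)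
      have "0 = sum U ?T" using U(1) by simp
      also have "\<dots> = (\<Sum>k\<in>?R. U (vs ! k))" using sumT[OF Rsub, of U] by simp
      also have "\<dots> = (\<Sum>k\<in>?R. lam * a k)" using ck by (intro sum.cong) (auto simp: c_def)
      also have "\<dots> = lam * (\<Sum>k\<in>?R. a k)" by (simp add: sum_distrib_left)
      finally have "lam = 0" using Spos by simp
      then have "\<forall>v\<in>?T. U v = 0" using ck by (auto simp: c_def)
      then show False using U(2) by blast
    qed
    define \<Sigma> where "\<Sigma> = (\<Sum>k\<in>?R. a k)"
    define u where "u x = a (the_inv_into ?R ((!) vs) x) / \<Sigma>" for x
    have uk: "u (vs ! k) = a k / \<Sigma>" if "k \<in> ?R" for k
      using that by (simp add: u_def the_inv_into_f_f[OF inj])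
    have "\<forall>x\<in>?T. 0 < u x" using uk a Spos by (auto simp: \<Sigma>_def)
    moreover have "sum u ?T = 1"
    proof -
      have "sum u ?T = (\<Sum>k\<in>?R. u (vs ! k))" using sumT[OF Rsub, of u] by simp
      also have "\<dots> = (\<Sum>k\<in>?R. a k / \<Sigma>)" by (rule sum.cong) (use uk in auto)
      also have "\<dots> = 1" using Spos by (simp add: sum_divide_distrib[symmetric] \<Sigma>_def)
      finally show ?thesis .
    qed
    moreover have "(\<Sum>x\<in>?T. u x *\<^sub>R x) = 0"
    proof -
      have "(\<Sum>x\<in>?T. u x *\<^sub>R x) = (\<Sum>k\<in>?R. u (vs ! k) *\<^sub>R vs ! k)"
        using sumT[OF Rsub, of "\<lambda>x. u x *\<^sub>R x"] by simp
      also have "\<dots> = (\<Sum>k\<in>?R. (a k / \<Sigma>) *\<^sub>R vs ! k)" by (rule sum.cong) (use uk in auto)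
      also have "\<dots> = (1 / \<Sigma>) *\<^sub>R (\<Sum>k\<in>?R. a k *\<^sub>R vs ! k)"
        by (simp add: scaleR_sum_right)
      also have "(\<Sum>k\<in>?R. a k *\<^sub>R vs ! k) = 0" using dep_from[of a] a by (simp add: dep_def)
      finally show ?thesis by simp
    qed
    ultimately have "0 \<in> interior (convex hull ?T)"
      using interior_convex_hull_explicit_minimal[OF na] cT by auto
    then show "0 \<in> interior (convex hull set (del_nth i vs))" using T by simp
  qed
qed

end

context HS begin

definition sig :: "nat \<Rightarrow> real" where
  "sig i = sgn (Fc (\<lambda>p. vs ! sk i (sk 0 p)))"

lemma W_sign:
  assumes i: "i < length vs" and N: "Npos i" and k: "k \<le> CARD('n)"
  shows "sgn (Fc (\<lambda>p. vs ! sk i (sk k p))) = (-1)^k * sig i"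
proof -
  obtain a where a: "dep a" "a i = 0" "\<forall>j<length vs. j \<noteq> i \<longrightarrow> a j > 0" using N Npos_def by blast
  have e: "{..CARD('n)} = {..<length vs - 1}" using len by auto
  have "(\<Sum>p\<in>{..CARD('n)}. a (sk i p) *\<^sub>R vs ! sk i p) = (\<Sum>k\<in>{..<length vs} - {i}. a k *\<^sub>R vs ! k)"
    unfolding e by (rule sum_sk[OF i])
  also have "\<dots> = (\<Sum>k<length vs. a k *\<^sub>R vs ! k)"
    by (rule sum.mono_neutral_left) (use a in auto)
  also have "\<dots> = 0" using a by (simp add: dep_def)
  finally have s: "(\<Sum>p\<in>{..CARD('n)}. a (sk i p) *\<^sub>R vs ! sk i p) = 0" .
  have pos: "a (sk i p) > 0" if "p \<le> CARD('n)" for p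
    using a that len by (auto simp: sk_def)
  show ?thesis using Fc_sign[of "\<lambda>p. a (sk i p)" "\<lambda>p. vs ! sk i p", OF s pos k] by (simp add: sig_def)
qed

lemma pair:
  assumes ii: "i < i'" "i' < length vs" and N: "Npos i" "Npos i'"
  shows "(-1)^i * sig i + (-1)^i' * sig i' = 0"
proof -
  obtain q where q: "i' = Suc q" using ii by (cases i') auto
  have f: "(\<lambda>p. vs ! sk i (sk q p)) = (\<lambda>p. vs ! sk i' (sk i p))"
    using ii q by (auto simp: sk_def fun_eq_iff)
  have A: "sgn (Fc (\<lambda>p. vs ! sk i (sk q p))) = (-1)^q * sig i"
    by (rule W_sign) (use ii N q len in auto)
  have B: "sgn (Fc (\<lambda>p. vs ! sk i' (sk i p))) = (-1)^i * sig i'"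
    by (rule W_sign) (use ii N q len in auto)
  have E: "(-1)^q * sig i = (-1)^i * sig i'" using A B f by simp
  have "(-1::real)^i * (-1)^i = 1" by (simp add: power_mult_distrib[symmetric])
  then have "sig i' = (-1)^i * (-1)^q * sig i" using E by (metis mult.assoc mult_1)
  then show ?thesis using q
    by (cases "even i"; cases "even q") (auto simp: algebra_simps)
qed

lemma S_val:
  assumes i: "i < length vs"
  shows "S (del_nth i vs) = (if Npos i then sig i else 0)"
proof -
  have l1: "length (del_nth i vs) = Suc CARD('n)" using i len by (simp add: len_del)
  have l2: "length (del_nth 0 (del_nth i vs)) = CARD('n)" using l1 by (simp add: len_del)
  have "Or (del_nth 0 (del_nth i vs)) = sgn (Fc (\<lambda>p. del_nth 0 (del_nth i vs) ! p))"
    using l2 by (simp add: Or_def Fc_def)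
  also have "Fc (\<lambda>p. del_nth 0 (del_nth i vs) ! p) = Fc (\<lambda>p. vs ! sk i (sk 0 p))"
  proof (rule Fc_cong)
    fix p assume p: "p < CARD('n)"
    have "del_nth 0 (del_nth i vs) ! p = del_nth i vs ! sk 0 p" using nth_del[of 0 "del_nth i vs" p] l1 p by simp
    also have "\<dots> = vs ! sk i (sk 0 p)" using nth_del[OF i, of "sk 0 p"] p len by (simp add: sk_def)
    finally show "del_nth 0 (del_nth i vs) ! p = vs ! sk i (sk 0 p)" .
  qed
  finally show ?thesis using C_iff[OF i] by (simp add: S_def sig_def)
qed

lemma dS_zero: "dS vs = 0"
proof -
  let ?N = "{i. i < length vs \<and> Npos i}"
  have "dS vs = (\<Sum>i<length vs. (-1)^i * S (del_nth i vs))"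
    by (simp add: dS_def)
  also have "\<dots> = (\<Sum>i<length vs. if Npos i then (-1)^i * sig i else 0)"
    by (rule sum.cong) (auto simp: S_val)
  also have "\<dots> = (\<Sum>i\<in>?N. (-1)^i * sig i)"
    by (subst sum.inter_filter[symmetric]) (auto intro!: sum.cong)
  also have "\<dots> = 0"
  proof (cases "?N = {}")
    case True show ?thesis by (simp only: True sum.empty)
  next
    case False
    then obtain p where p: "p < length vs" "Npos p" by auto
    obtain q where q: "q < length vs" "q \<noteq> p" "Npos q" using second[OF p] by auto
    have NE: "?N = {p, q}" using no_three p q by blast
    show ?thesis
    proof (cases "p < q")
      case True then show ?thesis using NE pair[OF True q(1) p(2) q(3)] q by simp
    next
      case False then have "q < p" using q by simp
      then show ?thesis using NE pair[OF \<open>q < p\<close> p(1) q(3) p(2)] q by (simp add: add.commute)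
    qed
  qed
  finally show ?thesis .
qed

end

theorem proposition8p1:
  fixes vs :: "(real^'n::enum) list"
  assumes "even CARD('n)"
    and "length vs = CARD('n) + 2"
    and "hereditarily_spanning vs"
  shows "dS vs = 0"
proof -
  have "CARD('n) \<noteq> 0" by simp
  then have "CARD('n) \<ge> 2" using assms(1) by presburger
  then interpret HS vs using assms by unfold_locales auto
  show ?thesis by (rule dS_zero)
qed

end
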